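(* Let $(X,Y)$ be random with $Y\in\{0,1\}$, let $f$ take values in $S=\{s_1,\dots,s_B\}\subseteq[0,1]$, let $T_n=\{(x_j,y_j)\}_{j=1}^n$ be i.i.d. from $(X,Y)$, and let $0<\delta<1$. Suppose $p_i>\frac{12}{n}\log\frac{2B}{\delta}$ for all $i$ and let $c(n)=\sqrt{\frac{3}{n\min_ip_i}\log\frac{2B}{\delta}}$. Then with probability at least $1-3\delta$, $\big|\hat{\mathcal{E}}_{\mathrm{pl}}^2-{E^*}^2\big|\le c(n){E^*}^2+\sqrt{\frac{2(1+c(n)){E^*}^2}{n}\log\frac{2}{\delta}}+\frac{B}{2n}\log\frac{2B}{\delta}$.
   Context: $p_i=\Pr(f(X)=s_i)$, $y_i^*=\mathbb{E}[Y\mid f(X)=s_i]$, ${E^*}^2=\sum_ip_i(s_i-y_i^* )^2$ is the squared calibration error of $f$. $\hat p_i=|\{j:f(x_j)=s_i\}|/n$, $\hat y_i$ is the average of $y_j$ over $j$ with $f(x_j)=s_i$, and the plugin estimator is $\hat{\mathcal{E}}_{\mathrm{pl}}^2=\sum_{i=1}^B\hat p_i(s_i-\hat y_i)^2$. *)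

theory Defs
  imports "HOL-Probability.Probability"
begin

text \<open>D is the joint law of (X,Y) on 'x \<times> real; the score function f takes values
  in S = {s 0, ..., s (B-1)}.  A sample T_n is a map T :: nat \<Rightarrow> 'x \<times> real,
  with entries T j for j < n, distributed according to the product measure.\<close>

definition cal_p :: "('x \<times> real) measure \<Rightarrow> ('x \<Rightarrow> real) \<Rightarrow> (nat \<Rightarrow> real) \<Rightarrow> nat \<Rightarrow> real" where
  "cal_p D f s i = measure D {z \<in> space D. f (fst z) = s i}"

definition cal_ystar :: "('x \<times> real) measure \<Rightarrow> ('x \<Rightarrow> real) \<Rightarrow> (nat \<Rightarrow> real) \<Rightarrow> nat \<Rightarrow> real" where
  "cal_ystar D f s i =
     (LINT z:{z \<in> space D. f (fst z) = s i}|D. snd z) / cal_p D f s i"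

definition cal_err2 :: "('x \<times> real) measure \<Rightarrow> ('x \<Rightarrow> real) \<Rightarrow> (nat \<Rightarrow> real) \<Rightarrow> nat \<Rightarrow> real" where
  "cal_err2 D f s B = (\<Sum>i<B. cal_p D f s i * (s i - cal_ystar D f s i)\<^sup>2)"

definition bin_idx :: "('x \<Rightarrow> real) \<Rightarrow> (nat \<Rightarrow> real) \<Rightarrow> nat \<Rightarrow> (nat \<Rightarrow> 'x \<times> real) \<Rightarrow> nat \<Rightarrow> nat set" where
  "bin_idx f s n T i = {j. j < n \<and> f (fst (T j)) = s i}"

definition hat_p :: "('x \<Rightarrow> real) \<Rightarrow> (nat \<Rightarrow> real) \<Rightarrow> nat \<Rightarrow> (nat \<Rightarrow> 'x \<times> real) \<Rightarrow> nat \<Rightarrow> real" where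
  "hat_p f s n T i = real (card (bin_idx f s n T i)) / real n"

text \<open>Empirical average of y_j over the bin (0 for an empty bin; it is then weighted by hat_p = 0).\<close>
definition hat_y :: "('x \<Rightarrow> real) \<Rightarrow> (nat \<Rightarrow> real) \<Rightarrow> nat \<Rightarrow> (nat \<Rightarrow> 'x \<times> real) \<Rightarrow> nat \<Rightarrow> real" where
  "hat_y f s n T i = (\<Sum>j\<in>bin_idx f s n T i. snd (T j)) / real (card (bin_idx f s n T i))"

definition plugin_err2 :: "('x \<Rightarrow> real) \<Rightarrow> (nat \<Rightarrow> real) \<Rightarrow> nat \<Rightarrow> nat \<Rightarrow> (nat \<Rightarrow> 'x \<times> real) \<Rightarrow> real" where
  "plugin_err2 f s B n T = (\<Sum>i<B. hat_p f s n T i * (s i - hat_y f s n T i)\<^sup>2)"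

end

theory Submission
  imports Defs
begin
lemma bern_mgf:
  fixes y mu :: real
  assumes "0 \<le> y" "y \<le> 1"
  shows "(1 - y) * exp (- mu * y) + y * exp (mu * (1 - y)) \<le> exp (mu\<^sup>2 / 8)"
proof (cases "mu \<ge> 0")
  case True
  have "- mu * y + ln (1 + y * (exp mu - 1)) \<le> mu\<^sup>2 / 8"
    using Hoeffdings_lemma_aux[of mu y] True assms by simp
  moreover have pos: "1 + y * (exp mu - 1) > 0"
    using assms True by (smt (verit) exp_ge_add_one_self mult_nonneg_nonneg)
  ultimately have "exp (- mu * y) * (1 + y * (exp mu - 1)) \<le> exp (mu\<^sup>2 / 8)"
    by (smt (verit, best) exp_add exp_le_cancel_iff exp_ln)
  moreover have "(1 - y) * exp (- mu * y) + y * exp (mu * (1 - y)) = exp (- mu * y) * (1 + y * (exp mu - 1))"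
    by (simp add: algebra_simps flip: exp_add)
  ultimately show ?thesis by simp
next
  case False
  define h where "h = - mu"
  have h: "h \<ge> 0" using False h_def by simp
  have "- h * (1 - y) + ln (1 + (1 - y) * (exp h - 1)) \<le> h\<^sup>2 / 8"
    using Hoeffdings_lemma_aux[of h "1 - y"] h assms by simp
  moreover have pos: "1 + (1 - y) * (exp h - 1) > 0"
    using assms h by (smt (verit) exp_ge_add_one_self mult_nonneg_nonneg)
  ultimately have "exp (- h * (1 - y)) * (1 + (1 - y) * (exp h - 1)) \<le> exp (h\<^sup>2 / 8)"
    by (smt (verit, best) exp_add exp_le_cancel_iff exp_ln)
  moreover have "(1 - y) * exp (- mu * y) + y * exp (mu * (1 - y)) = exp (- h * (1 - y)) * (1 + (1 - y) * (exp h - 1))"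
    by (simp add: h_def algebra_simps flip: exp_add)
  ultimately show ?thesis by (simp add: h_def)
qed

lemma exp_upper_34:
  fixes x :: real
  assumes "0 \<le> x" "x \<le> 1/2"
  shows "exp x \<le> 1 + x + 3/4 * x\<^sup>2"
proof -
  let ?g = "\<lambda>x::real. 1 + x + 3/4 * x\<^sup>2 - exp x"
  have d: "\<And>t. (?g has_real_derivative (1 + 3/2 * t - exp t)) (at t)"
    by (auto intro!: derivative_eq_intros)
  have "?g 0 \<le> ?g x"
  proof (rule DERIV_nonneg_imp_nondecreasing[of 0 x ?g])
    fix t assume t: "0 \<le> t" "t \<le> x"
    have e: "exp t \<le> 1 + t + t\<^sup>2" using exp_bound[of t] t assms by simp
    have "t * (2*t) \<le> t * 1" by (intro mult_left_mono) (use t assms in auto)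
    then have "t\<^sup>2 \<le> t / 2" by (simp add: power2_eq_square)
    with e show "\<exists>y. (?g has_real_derivative y) (at t) \<and> 0 \<le> y"
      using d by (intro exI[of _ "1 + 3/2 * t - exp t"]) auto
  qed (use assms in auto)
  then show ?thesis by simp
qed

lemma exp_minus_upper:
  fixes x :: real
  assumes "0 \<le> x"
  shows "exp (- x) \<le> 1 - x + x\<^sup>2 / 2"
proof -
  let ?g = "\<lambda>x::real. 1 - x + x\<^sup>2 / 2 - exp (- x)"
  have d: "\<And>t. (?g has_real_derivative (- 1 + t + exp (- t))) (at t)"
    by (auto intro!: derivative_eq_intros)
  have "?g 0 \<le> ?g x"
  proof (rule DERIV_nonneg_imp_nondecreasing[of 0 x ?g])
    fix t assume t: "0 \<le> t" "t \<le> x"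
    show "\<exists>y. (?g has_real_derivative y) (at t) \<and> 0 \<le> y"
      using d exp_minus_ge[of t] by (intro exI[of _ "- 1 + t + exp (- t)"]) auto
  qed (use assms in auto)
  then show ?thesis by simp
qed

lemma chern_up:
  fixes q d L l1 :: real
  assumes q: "q > 0" and d2: "d\<^sup>2 = 3 * q * L" and l1: "l1 = 2 * d / (3 * q)"
  shows "q * (l1 + 3/4 * l1\<^sup>2) - l1 * (q + d) = - L"
proof -
  have "q * (l1 + 3/4 * l1\<^sup>2) - l1 * (q + d) = 3/4 * q * l1\<^sup>2 - l1 * d"
    by (simp add: algebra_simps)
  also have "\<dots> = d\<^sup>2 / (3 * q) - 2 * d\<^sup>2 / (3 * q)"
    using q unfolding l1 by (simp add: power2_eq_square)
  also have "\<dots> = - L" using q unfolding d2 by simp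
  finally show ?thesis .
qed

lemma chern_lo:
  fixes q d L e :: real
  assumes q: "q > 0" and d2: "d\<^sup>2 = 3 * q * L" and e: "e = d / q"
  shows "q * (- e + e\<^sup>2 / 2) - (- e * (q - d)) = - 3 / 2 * L"
proof -
  have "q * (- e + e\<^sup>2 / 2) - (- e * (q - d)) = q * e\<^sup>2 / 2 - e * d"
    by (simp add: algebra_simps)
  also have "\<dots> = d\<^sup>2 / (2 * q) - d\<^sup>2 / q"
    using q unfolding e by (simp add: power2_eq_square)
  also have "\<dots> = - 3 / 2 * L" using q unfolding d2 by simp
  finally show ?thesis .
qed

lemma chern_l1:
  fixes q d L :: real
  assumes q: "q > 0" and d0: "d \<ge> 0" and d2: "d\<^sup>2 = 3 * q * L" and qL: "12 * L < q" and L: "L > 0"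
  shows "2 * d / (3 * q) \<le> 1/2"
proof -
  have "q * (48 * L) \<le> q * (9 * q)" using qL q L by (intro mult_left_mono) auto
  moreover have "(4 * d)\<^sup>2 = 16 * d\<^sup>2" by (simp add: power_mult_distrib)
  moreover have "16 * d\<^sup>2 = q * (48 * L)" unfolding d2 by simp
  moreover have "(3 * q)\<^sup>2 = q * (9 * q)" by (simp add: power2_eq_square)
  ultimately have h: "(4 * d)\<^sup>2 \<le> (3 * q)\<^sup>2" by simp
  have "4 * d \<le> 3 * q" by (rule power2_le_imp_le[OF h]) (use q in simp)
  then show ?thesis using q by (simp add: pos_divide_le_eq)
qed

lemma prod_markov:
  fixes D :: "'a measure" and g :: "nat \<Rightarrow> 'a \<Rightarrow> real" and n :: nat
  assumes D: "prob_space D"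
    and A: "A \<in> sets (PiM {..<n} (\<lambda>_. D))"
    and gm: "\<And>j. j < n \<Longrightarrow> g j \<in> borel_measurable D"
    and gnn: "\<And>j z. j < n \<Longrightarrow> z \<in> space D \<Longrightarrow> 0 \<le> g j z"
    and gi: "\<And>j. j < n \<Longrightarrow> integrable D (g j)"
    and a: "a > 0" and aA: "\<And>T. T \<in> A \<Longrightarrow> a \<le> (\<Prod>j<n. g j (T j))"
  shows "measure (PiM {..<n} (\<lambda>_. D)) A \<le> (\<Prod>j<n. integral\<^sup>L D (g j)) / a"
proof -
  interpret D: prob_space D by fact
  interpret P: product_sigma_finite "\<lambda>_::nat. D"
    by standard
  let ?P = "PiM {..<n} (\<lambda>_. D)"
  interpret PP: prob_space ?P by (rule prob_space_PiM) (rule D)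
  define G where "G T = (\<Prod>j<n. g j (T j))" for T
  have Gm: "G \<in> borel_measurable ?P"
    unfolding G_def
  proof (intro borel_measurable_prod)
    fix j assume "j \<in> {..<n}"
    then show "(\<lambda>x. g j (x j)) \<in> borel_measurable ?P"
      using measurable_compose[OF measurable_component_singleton[of j "{..<n}" "\<lambda>_. D"] gm[of j]] by auto
  qed
  have Inn: "0 \<le> (\<Prod>j<n. integral\<^sup>L D (g j))"
    by (intro prod_nonneg integral_nonneg_AE AE_I2) (auto simp: gnn)
  have int: "(\<integral>\<^sup>+T. ennreal (G T) \<partial>?P) = ennreal (\<Prod>j<n. integral\<^sup>L D (g j))"
  proof -
    have "(\<integral>\<^sup>+T. ennreal (G T) \<partial>?P) = (\<integral>\<^sup>+T. (\<Prod>j<n. ennreal (g j (T j))) \<partial>?P)"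
      unfolding G_def
      by (intro nn_integral_cong prod_ennreal[symmetric]) (auto simp: space_PiM PiE_def Pi_iff gnn)
    also have "\<dots> = (\<Prod>j<n. \<integral>\<^sup>+z. ennreal (g j z) \<partial>D)"
      by (rule P.product_nn_integral_prod) (auto intro!: measurable_compose[OF gm] measurable_ennreal)
    also have "\<dots> = (\<Prod>j<n. ennreal (integral\<^sup>L D (g j)))"
      by (intro prod.cong refl nn_integral_eq_integral) (auto simp: gi gnn intro!: AE_I2)
    also have "\<dots> = ennreal (\<Prod>j<n. integral\<^sup>L D (g j))"
      by (rule prod_ennreal) (auto intro!: integral_nonneg_AE AE_I2 simp: gnn)
    finally show ?thesis .
  qed
  have "emeasure ?P A = (\<integral>\<^sup>+T. indicator A T \<partial>?P)"
    using A by simp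
  also have "\<dots> \<le> (\<integral>\<^sup>+T. ennreal (G T) * ennreal (1/a) \<partial>?P)"
  proof (intro nn_integral_mono)
    fix T assume "T \<in> space ?P"
    show "indicator A T \<le> ennreal (G T) * ennreal (1/a)"
    proof (cases "T \<in> A")
      case True
      have "1 \<le> G T / a" using aA[OF True] a by (simp add: G_def)
      then have "ennreal 1 \<le> ennreal (G T / a)" by (rule ennreal_leI)
      then show ?thesis using True a by (simp add: ennreal_mult'' divide_inverse)
    qed simp
  qed
  also have "\<dots> = (\<integral>\<^sup>+T. ennreal (G T) \<partial>?P) * ennreal (1/a)"
    using Gm by (intro nn_integral_multc) auto
  also have "\<dots> = ennreal ((\<Prod>j<n. integral\<^sup>L D (g j)) / a)"
    using a by (simp add: int ennreal_mult'' divide_inverse)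
  finally have "emeasure ?P A \<le> ennreal ((\<Prod>j<n. integral\<^sup>L D (g j)) / a)" .
  then show ?thesis
    using Inn a by (simp add: PP.emeasure_eq_measure ennreal_le_iff)
qed

locale calsetup =
  fixes Mx :: "'x measure" and D :: "('x \<times> real) measure"
    and f :: "'x \<Rightarrow> real" and s :: "nat \<Rightarrow> real" and B n :: nat and \<delta> :: real
  assumes Dprob: "prob_space D"
    and Dsets: "sets D = sets (Mx \<Otimes>\<^sub>M borel)"
    and AE01: "AE z in D. snd z \<in> {0, 1}"
    and fmeas: "f \<in> borel_measurable Mx"
    and frange: "\<And>x. x \<in> space Mx \<Longrightarrow> f x \<in> s ` {..<B}"
    and sinj: "inj_on s {..<B}"
    and s01: "\<And>i. i < B \<Longrightarrow> s i \<in> {0..1}"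
    and npos: "n > 0"
    and dpos: "0 < \<delta>" and dlt1: "\<delta> < 1"
    and pbig: "\<And>i. i < B \<Longrightarrow> cal_p D f s i > 12 / real n * ln (2 * real B / \<delta>)"
begin

sublocale D: prob_space D by (rule Dprob)

definition "bin i = {z \<in> space D. f (fst z) = s i}"
definition "p i = cal_p D f s i"
definition "y i = cal_ystar D f s i"
definition "idx z = inv_into {..<B} s (f (fst z))"
definition "L = ln (2 * real B / \<delta>)"

lemma p_def': "p i = measure D (bin i)"
  by (simp add: p_def cal_p_def bin_def)

lemma fst_meas[measurable]: "fst \<in> measurable D Mx"
  by (simp add: measurable_cong_sets[OF Dsets refl])

lemma snd_meas[measurable]: "snd \<in> borel_measurable D"
  by (simp add: measurable_cong_sets[OF Dsets refl])

lemma ffst_meas[measurable]: "(\<lambda>z. f (fst z)) \<in> borel_measurable D"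
  using measurable_compose[OF fst_meas fmeas] by simp

lemma bin_sets[measurable]: "bin i \<in> sets D"
  unfolding bin_def by measurable

lemma spaceD: "space D = space (Mx \<Otimes>\<^sub>M borel)"
  using sets_eq_imp_space_eq[OF Dsets] .

lemma fst_space: "z \<in> space D \<Longrightarrow> fst z \<in> space Mx"
  by (auto simp: spaceD space_pair_measure)

lemma idx: "z \<in> space D \<Longrightarrow> idx z < B \<and> s (idx z) = f (fst z)"
  using frange[OF fst_space] unfolding idx_def
  by (metis f_inv_into_f inv_into_into lessThan_iff)

lemma idx_iff: "z \<in> space D \<Longrightarrow> i < B \<Longrightarrow> f (fst z) = s i \<longleftrightarrow> idx z = i"
proof -
  assume z: "z \<in> space D" and i: "i < B"
  have "idx z < B" "s (idx z) = f (fst z)" using idx[OF z] by auto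
  then show ?thesis using i inj_onD[OF sinj, of "idx z" i] by auto
qed

lemma bin_iff: "i < B \<Longrightarrow> z \<in> bin i \<longleftrightarrow> z \<in> space D \<and> idx z = i"
  unfolding bin_def using idx_iff[of z i] idx[of z] by auto

lemma Bpos: "B > 0"
proof -
  obtain z where "z \<in> space D" using D.not_empty by blast
  then show ?thesis using idx[of z] by auto
qed

lemma Lpos: "L > 0"
proof -
  have "2 * real B / \<delta> > 1" using Bpos dpos dlt1 by (simp add: field_simps)
  then show ?thesis unfolding L_def by simp
qed

lemma ppos: "i < B \<Longrightarrow> p i > 0"
proof -
  assume i: "i < B"
  have "12 / real n * L > 0" using Lpos npos by simp
  then show ?thesis using pbig[OF i] by (simp add: p_def L_def)
qed

lemma pbig': "i < B \<Longrightarrow> 12 * L < real n * p i"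
  using pbig[of i] npos by (simp add: p_def L_def field_simps)

lemma p_le1: "p i \<le> 1"
  by (simp add: p_def')

lemma sum_p: "(\<Sum>i<B. p i) = 1"
proof -
  have "(\<Sum>i<B. p i) = measure D (\<Union>i<B. bin i)"
    unfolding p_def'
    by (rule D.finite_measure_finite_Union[symmetric])
       (auto simp: disjoint_family_on_def bin_def dest: inj_onD[OF sinj])
  also have "(\<Union>i<B. bin i) = space D"
    using idx by (auto simp: bin_def) (metis lessThan_iff)
  finally show ?thesis by (simp add: D.prob_space)
qed

lemma AE_snd: "AE z in D. 0 \<le> snd z \<and> snd z \<le> 1"
  using AE01 by eventually_elim auto

lemma int_ind_snd: "integrable D (\<lambda>z. indicator (bin i) z * snd z)"
  by (rule D.integrable_const_bound[where B=1]) (rule eventually_mono[OF AE_snd], auto split: split_indicator)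

lemma int_ind: "integrable D (indicator (bin i) :: _ \<Rightarrow> real)"
  by (rule D.integrable_const_bound[where B=1]) (auto split: split_indicator)

lemma int_bin_snd: "i < B \<Longrightarrow> (\<integral>z. indicator (bin i) z * snd z \<partial>D) = p i * y i"
  using ppos[of i]
  by (simp add: y_def cal_ystar_def set_lebesgue_integral_def p_def[symmetric] bin_def[symmetric])

lemma y01: "i < B \<Longrightarrow> 0 \<le> y i \<and> y i \<le> 1"
proof -
  assume i: "i < B"
  have "0 \<le> (\<integral>z. indicator (bin i) z * snd z \<partial>D)"
    by (rule integral_nonneg_AE) (rule eventually_mono[OF AE_snd], auto split: split_indicator)
  moreover have "(\<integral>z. indicator (bin i) z * snd z \<partial>D) \<le> (\<integral>z. indicator (bin i) z \<partial>D)"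
    by (rule integral_mono_AE) (auto intro: int_ind_snd int_ind eventually_mono[OF AE_snd] split: split_indicator)
  ultimately show ?thesis using int_bin_snd[OF i] ppos[OF i]
    by (simp add: p_def' zero_le_mult_iff)
qed

lemma int_bin_exp: "integrable D (\<lambda>z. indicator (bin i) z * exp (\<mu> * (c - snd z)))"
proof (rule D.integrable_const_bound[where B="exp (\<bar>\<mu>\<bar> * (\<bar>c\<bar> + 1))"])
  show "AE z in D. norm (indicator (bin i) z * exp (\<mu> * (c - snd z))) \<le> exp (\<bar>\<mu>\<bar> * (\<bar>c\<bar> + 1))"
  proof (rule eventually_mono[OF AE_snd])
    fix z :: "'x \<times> real" assume z: "0 \<le> snd z \<and> snd z \<le> 1"
    have "\<mu> * (c - snd z) \<le> \<bar>\<mu> * (c - snd z)\<bar>" by simp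
    also have "\<dots> = \<bar>\<mu>\<bar> * \<bar>c - snd z\<bar>" by (simp add: abs_mult)
    also have "\<dots> \<le> \<bar>\<mu>\<bar> * (\<bar>c\<bar> + 1)" using z by (intro mult_left_mono) auto
    finally have "exp (\<mu> * (c - snd z)) \<le> exp (\<bar>\<mu>\<bar> * (\<bar>c\<bar> + 1))" by simp
    then show "norm (indicator (bin i) z * exp (\<mu> * (c - snd z))) \<le> exp (\<bar>\<mu>\<bar> * (\<bar>c\<bar> + 1))"
      by (auto split: split_indicator)
  qed
qed measurable

lemma bin_hoeff:
  assumes i: "i < B"
  shows "(\<integral>z. indicator (bin i) z * exp (\<mu> * (y i - snd z)) \<partial>D) \<le> p i * exp (\<mu>\<^sup>2 / 8)"
proof -
  define a where "a = exp (\<mu> * y i)"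
  define b where "b = exp (\<mu> * (y i - 1))"
  have "(\<integral>z. indicator (bin i) z * exp (\<mu> * (y i - snd z)) \<partial>D)
      \<le> (\<integral>z. a * indicator (bin i) z - a * (indicator (bin i) z * snd z) + b * (indicator (bin i) z * snd z) \<partial>D)"
  proof (rule integral_mono_AE)
    show "AE z in D. indicator (bin i) z * exp (\<mu> * (y i - snd z))
        \<le> a * indicator (bin i) z - a * (indicator (bin i) z * snd z) + b * (indicator (bin i) z * snd z)"
    proof (rule eventually_mono[OF AE_snd])
      fix z :: "'x \<times> real" assume z: "0 \<le> snd z \<and> snd z \<le> 1"
      have "exp ((1 - snd z) *\<^sub>R (\<mu> * y i) + snd z *\<^sub>R (\<mu> * (y i - 1)))
          \<le> (1 - snd z) * exp (\<mu> * y i) + snd z * exp (\<mu> * (y i - 1))"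
        using z by (intro convex_onD[OF exp_convex]) auto
      moreover have "(1 - snd z) *\<^sub>R (\<mu> * y i) + snd z *\<^sub>R (\<mu> * (y i - 1)) = \<mu> * (y i - snd z)"
        by (simp add: algebra_simps)
      ultimately have "exp (\<mu> * (y i - snd z)) \<le> (1 - snd z) * a + snd z * b"
        by (simp add: a_def b_def)
      then show "indicator (bin i) z * exp (\<mu> * (y i - snd z))
        \<le> a * indicator (bin i) z - a * (indicator (bin i) z * snd z) + b * (indicator (bin i) z * snd z)"
        by (auto split: split_indicator simp: algebra_simps)
    qed
  qed (auto intro!: int_bin_exp int_ind int_ind_snd Bochner_Integration.integrable_add Bochner_Integration.integrable_diff integrable_mult_right)
  also have "\<dots> = a * p i - a * (p i * y i) + b * (p i * y i)"
    using int_ind int_ind_snd int_bin_snd[OF i] by (simp add: p_def')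
  also have "\<dots> = p i * ((1 - y i) * exp (- (- \<mu>) * y i) + y i * exp ((- \<mu>) * (1 - y i)))"
    by (simp add: a_def b_def algebra_simps)
  also have "\<dots> \<le> p i * exp ((- \<mu>)\<^sup>2 / 8)"
    using y01[OF i] ppos[OF i] by (intro mult_left_mono bern_mgf) auto
  finally show ?thesis by simp
qed

end

context calsetup begin

definition "P = PiM {..<n} (\<lambda>_. D)"
definition "cnt i T = (\<Sum>j<n. if f (fst (T j)) = s i then 1 else 0 :: real)"
definition "ssum i T = (\<Sum>j<n. if f (fst (T j)) = s i then snd (T j) else 0)"

sublocale PP: prob_space P unfolding P_def by (rule prob_space_PiM) (rule Dprob)

lemma cnt_meas[measurable]: "cnt i \<in> borel_measurable P"
  unfolding cnt_def P_def by measurable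

lemma ssum_meas[measurable]: "ssum i \<in> borel_measurable P"
  unfolding ssum_def P_def by measurable

lemma space_P: "T \<in> space P \<Longrightarrow> j < n \<Longrightarrow> T j \<in> space D"
  by (auto simp: P_def space_PiM PiE_def Pi_iff)

lemma card_bin_idx: "real (card (bin_idx f s n T i)) = cnt i T"
proof -
  have "real (card (bin_idx f s n T i)) = (\<Sum>j\<in>bin_idx f s n T i. 1)" by simp
  also have "\<dots> = (\<Sum>j\<in>{..<n}. if f (fst (T j)) = s i then 1 else 0)"
    by (subst sum.If_cases) (auto simp: bin_idx_def intro!: arg_cong[where f=card])
  finally show ?thesis by (simp add: cnt_def)
qed

lemma sum_bin_idx: "(\<Sum>j\<in>bin_idx f s n T i. snd (T j)) = ssum i T"
  unfolding ssum_def
  by (subst sum.If_cases) (auto simp: bin_idx_def intro!: sum.cong)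

lemma cnt_nonneg: "cnt i T \<ge> 0"
  unfolding cnt_def by (intro sum_nonneg) auto

lemma cnt0: "cnt i T = 0 \<Longrightarrow> ssum i T = 0"
proof -
  assume "cnt i T = 0"
  then have "\<forall>j\<in>{..<n}. (if f (fst (T j)) = s i then 1 else 0 :: real) = 0"
    unfolding cnt_def by (subst sum_nonneg_eq_0_iff[symmetric]) auto
  then show ?thesis unfolding ssum_def by (intro sum.neutral) (auto split: if_splits)
qed

lemma plugin_eq: "plugin_err2 f s B n T = (\<Sum>i<B. cnt i T / n * (s i - ssum i T / cnt i T)\<^sup>2)"
  unfolding plugin_err2_def hat_p_def hat_y_def card_bin_idx sum_bin_idx ..

lemma mgf_cnt:
  assumes i: "i < B"
  shows "measure P {T \<in> space P. a \<le> lam * cnt i T} \<le> exp (n * p i * (exp lam - 1) - a)"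
proof -
  define g where "g j z = exp (lam * indicator (bin i) z)" for j :: nat and z
  have intg: "integral\<^sup>L D (g j) = 1 + (exp lam - 1) * p i" for j
  proof -
    have "integral\<^sup>L D (g j) = (\<integral>z. 1 + (exp lam - 1) * indicator (bin i) z \<partial>D)"
      unfolding g_def by (intro Bochner_Integration.integral_cong) (auto split: split_indicator)
    also have "\<dots> = 1 + (exp lam - 1) * p i"
      using int_ind[of i] by (simp add: p_def' D.prob_space)
    finally show ?thesis .
  qed
  have "measure P {T \<in> space P. a \<le> lam * cnt i T} \<le> (\<Prod>j<n. integral\<^sup>L D (g j)) / exp a"
    unfolding P_def
  proof (rule prod_markov[OF Dprob])
    show "{T \<in> space (Pi\<^sub>M {..<n} (\<lambda>_. D)). a \<le> lam * cnt i T} \<in> sets (Pi\<^sub>M {..<n} (\<lambda>_. D))"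
      using cnt_meas[of i] unfolding P_def by measurable
    show "integrable D (g j)" for j
      unfolding g_def by (rule D.integrable_const_bound[where B="exp \<bar>lam\<bar>"]) (auto split: split_indicator)
    show "g j \<in> borel_measurable D" for j unfolding g_def by measurable
    fix T assume T: "T \<in> {T \<in> space (Pi\<^sub>M {..<n} (\<lambda>_. D)). a \<le> lam * cnt i T}"
    have "(\<Prod>j<n. g j (T j)) = exp (\<Sum>j<n. lam * indicator (bin i) (T j))"
      unfolding g_def by (rule exp_sum[symmetric]) simp
    also have "(\<Sum>j<n. lam * indicator (bin i) (T j)) = lam * cnt i T"
      unfolding cnt_def sum_distrib_left
      using space_P[of T] T unfolding P_def[symmetric]
      by (intro sum.cong) (auto simp: bin_def split: split_indicator)
    finally show "exp a \<le> (\<Prod>j<n. g j (T j))" using T by simp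
  qed (auto simp: g_def)
  also have "(\<Prod>j<n. integral\<^sup>L D (g j)) / exp a = (1 + (exp lam - 1) * p i) ^ n / exp a"
    by (simp add: intg)
  also have "\<dots> \<le> exp ((exp lam - 1) * p i) ^ n / exp a"
  proof -
    have "0 \<le> 1 + (exp lam - 1) * p i"
      using ppos[OF i] p_le1[of i] by (smt (verit) exp_gt_zero mult_le_cancel_left1 mult_nonneg_nonneg)
    then show ?thesis by (intro divide_right_mono power_mono) auto
  qed
  also have "\<dots> = exp (n * p i * (exp lam - 1) - a)"
    by (simp only: exp_diff exp_of_nat_mult[symmetric]) (simp add: algebra_simps)
  finally show ?thesis .
qed

definition "dd i = sqrt (3 * n * p i * L)"

lemma chernoff:
  assumes i: "i < B"
  shows "measure P {T \<in> space P. dd i \<le> \<bar>cnt i T - n * p i\<bar>} \<le> 2 * exp (- L)"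
proof -
  define q where "q = n * p i"
  define d where "d = dd i"
  have q: "q > 0" using ppos[OF i] npos by (simp add: q_def)
  have qL: "12 * L < q" using pbig'[OF i] by (simp add: q_def)
  have d0: "d \<ge> 0" using Lpos q by (simp add: d_def dd_def q_def)
  have d2: "d\<^sup>2 = 3 * q * L" using Lpos q by (simp add: d_def dd_def q_def)
  define l1 where "l1 = 2 * d / (3 * q)"
  define e where "e = d / q"
  have l1: "0 \<le> l1" "l1 \<le> 1/2"
  proof -
    show "0 \<le> l1" using d0 q by (simp add: l1_def)
    show "l1 \<le> 1/2" unfolding l1_def by (rule chern_l1[OF q d0 d2 qL Lpos])
  qed
  have e0: "0 \<le> e" using d0 q by (simp add: e_def)
  define U where "U = {T \<in> space P. l1 * (q + d) \<le> l1 * cnt i T}"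
  define Lo where "Lo = {T \<in> space P. - e * (q - d) \<le> (- e) * cnt i T}"
  have sub: "{T \<in> space P. dd i \<le> \<bar>cnt i T - n * p i\<bar>} \<subseteq> U \<union> Lo"
    using l1 e0 by (auto simp: U_def Lo_def d_def[symmetric] q_def[symmetric] abs_if intro: mult_left_mono split: if_splits)
  have "measure P U \<le> exp (q * (exp l1 - 1) - l1 * (q + d))"
    unfolding U_def q_def by (rule mgf_cnt[OF i])
  also have "\<dots> \<le> exp (q * (l1 + 3/4 * l1\<^sup>2) - l1 * (q + d))"
    using exp_upper_34[OF l1] q by (intro iffD2[OF exp_le_cancel_iff] diff_right_mono mult_left_mono) auto
  also have "q * (l1 + 3/4 * l1\<^sup>2) - l1 * (q + d) = - L"
    by (rule chern_up[OF q d2 l1_def])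
  finally have U: "measure P U \<le> exp (- L)" .
  have "measure P Lo \<le> exp (q * (exp (- e) - 1) - (- e * (q - d)))"
    unfolding Lo_def q_def by (rule mgf_cnt[OF i])
  also have "\<dots> \<le> exp (q * (- e + e\<^sup>2 / 2) - (- e * (q - d)))"
    using exp_minus_upper[OF e0] q by (intro iffD2[OF exp_le_cancel_iff] diff_right_mono mult_left_mono) auto
  also have "q * (- e + e\<^sup>2 / 2) - (- e * (q - d)) = - 3 / 2 * L"
    by (rule chern_lo[OF q d2 e_def])
  also have "exp (- 3 / 2 * L) \<le> exp (- L)" using Lpos by simp
  finally have Lo: "measure P Lo \<le> exp (- L)" .
  have "measure P {T \<in> space P. dd i \<le> \<bar>cnt i T - n * p i\<bar>} \<le> measure P (U \<union> Lo)"
    using sub by (intro PP.finite_measure_mono) (auto simp: U_def Lo_def)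
  also have "\<dots> \<le> measure P U + measure P Lo"
    by (rule measure_Un_le) (auto simp: U_def Lo_def)
  finally show ?thesis using U Lo by simp
qed

end

context calsetup begin

definition "e i = s i - y i"
definition "W T = (\<Sum>i<B. 2 * e i * (cnt i T * y i - ssum i T) / n)"
definition "T1 T = (\<Sum>i<B. cnt i T / n * (e i)\<^sup>2)"

lemma W_meas[measurable]: "W \<in> borel_measurable P" unfolding W_def by measurable
lemma T1_meas[measurable]: "T1 \<in> borel_measurable P" unfolding T1_def by measurable

lemma regroup:
  assumes T: "T \<in> space P"
  shows "(\<Sum>j<n. F (idx (T j)) (T j)) = (\<Sum>i<B. \<Sum>j<n. if f (fst (T j)) = s i then F i (T j) else 0)"
proof -
  have "(\<Sum>j<n. F (idx (T j)) (T j)) = (\<Sum>j<n. \<Sum>i<B. if f (fst (T j)) = s i then F i (T j) else 0)"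
  proof (intro sum.cong refl)
    fix j assume j: "j \<in> {..<n}"
    then have Tj: "T j \<in> space D" using space_P[OF T] by auto
    have "(\<Sum>i<B. if f (fst (T j)) = s i then F i (T j) else 0) = (\<Sum>i<B. if idx (T j) = i then F i (T j) else 0)"
      by (intro sum.cong refl) (simp add: idx_iff[OF Tj])
    also have "\<dots> = F (idx (T j)) (T j)" using idx[OF Tj] by (simp add: sum.delta)
    finally show "F (idx (T j)) (T j) = (\<Sum>i<B. if f (fst (T j)) = s i then F i (T j) else 0)" ..
  qed
  also have "\<dots> = (\<Sum>i<B. \<Sum>j<n. if f (fst (T j)) = s i then F i (T j) else 0)"
    by (rule sum.swap)
  finally show ?thesis .
qed

lemma sum_lin: "(\<Sum>j<n. if f (fst (T j)) = s i then a * (b - snd (T j)) else 0) = a * (b * cnt i T - ssum i T)"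
proof -
  have "(\<Sum>j<n. if f (fst (T j)) = s i then a * (b - snd (T j)) else 0)
      = (\<Sum>j<n. a * b * (if f (fst (T j)) = s i then 1 else 0) - a * (if f (fst (T j)) = s i then snd (T j) else 0))"
    by (intro sum.cong) (auto simp: algebra_simps)
  also have "\<dots> = a * (b * cnt i T - ssum i T)"
    by (simp add: sum_subtractf sum_distrib_left cnt_def ssum_def algebra_simps)
  finally show ?thesis .
qed

lemma sum_const_bin: "(\<Sum>j<n. if f (fst (T j)) = s i then a else 0) = a * cnt i T"
  by (simp add: cnt_def sum_distrib_left if_distrib cong: if_cong)

lemma hoeff_W:
  fixes t V \<sigma> :: real
  assumes V: "V > 0" and t: "t \<ge> 0" and sg: "\<sigma> = 1 \<or> \<sigma> = -1"
  shows "measure P {T \<in> space P. t \<le> \<sigma> * W T \<and> T1 T \<le> V} \<le> exp (- (real n * t\<^sup>2 / (2 * V)))"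
proof -
  define lam where "lam = n * t / V"
  have lam0: "lam \<ge> 0" using V t by (simp add: lam_def)
  have sg2: "\<sigma>\<^sup>2 = 1" using sg by auto
  define mu where "mu i = \<sigma> * lam * 2 * e i / n" for i
  define c where "c i = exp (- (lam\<^sup>2 * (e i)\<^sup>2 / (2 * n\<^sup>2)))" for i
  define g where "g (j::nat) z = (\<Sum>i<B. c i * (indicator (bin i) z * exp (mu i * (y i - snd z))))" for j z
  have gidx: "g j z = exp (mu (idx z) * (y (idx z) - snd z) - lam\<^sup>2 * (e (idx z))\<^sup>2 / (2 * n\<^sup>2))"
    if z: "z \<in> space D" for j z
  proof -
    have "g j z = (\<Sum>i<B. if idx z = i then c i * exp (mu i * (y i - snd z)) else 0)"
      unfolding g_def by (intro sum.cong refl) (auto simp: bin_iff z split: split_indicator)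
    also have "\<dots> = c (idx z) * exp (mu (idx z) * (y (idx z) - snd z))"
      using idx[OF z] by (simp add: sum.delta)
    finally show ?thesis by (simp add: c_def exp_add[symmetric] exp_diff)
  qed
  have intg: "integral\<^sup>L D (g j) \<le> 1" for j
  proof -
    have "integral\<^sup>L D (g j) = (\<Sum>i<B. c i * (\<integral>z. indicator (bin i) z * exp (mu i * (y i - snd z)) \<partial>D))"
      unfolding g_def by (simp add: int_bin_exp)
    also have "\<dots> \<le> (\<Sum>i<B. c i * (p i * exp ((mu i)\<^sup>2 / 8)))"
      by (intro sum_mono mult_left_mono bin_hoeff) (auto simp: c_def)
    also have "\<dots> = (\<Sum>i<B. p i)"
    proof (intro sum.cong refl)
      fix i
      have "c i * exp ((mu i)\<^sup>2 / 8) = 1"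
        unfolding c_def mu_def exp_add[symmetric]
        using npos by (simp add: power_mult_distrib sg2 field_simps)
      then show "c i * (p i * exp ((mu i)\<^sup>2 / 8)) = p i" by (simp add: algebra_simps)
    qed
    finally show ?thesis by (simp add: sum_p)
  qed
  have "measure P {T \<in> space P. t \<le> \<sigma> * W T \<and> T1 T \<le> V}
      \<le> (\<Prod>j<n. integral\<^sup>L D (g j)) / exp (lam * t - lam\<^sup>2 * V / (2 * n))"
    unfolding P_def
  proof (rule prod_markov[OF Dprob])
    show "{T \<in> space (Pi\<^sub>M {..<n} (\<lambda>_. D)). t \<le> \<sigma> * W T \<and> T1 T \<le> V} \<in> sets (Pi\<^sub>M {..<n} (\<lambda>_. D))"
      using W_meas T1_meas unfolding P_def by measurable
    show "g j \<in> borel_measurable D" for j unfolding g_def by measurable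
    show "integrable D (g j)" for j unfolding g_def by (auto intro!: int_bin_exp)
    show "0 \<le> g j z" if "z \<in> space D" for j z using gidx[OF that] by simp
    fix T assume T: "T \<in> {T \<in> space (Pi\<^sub>M {..<n} (\<lambda>_. D)). t \<le> \<sigma> * W T \<and> T1 T \<le> V}"
    then have TP: "T \<in> space P" and tW: "t \<le> \<sigma> * W T" and TV: "T1 T \<le> V" by (auto simp: P_def)
    have "(\<Prod>j<n. g j (T j)) = (\<Prod>j<n. exp (mu (idx (T j)) * (y (idx (T j)) - snd (T j)) - lam\<^sup>2 * (e (idx (T j)))\<^sup>2 / (2 * n\<^sup>2)))"
      by (intro prod.cong refl gidx space_P[OF TP]) auto
    also have "\<dots> = exp (\<Sum>j<n. mu (idx (T j)) * (y (idx (T j)) - snd (T j)) - lam\<^sup>2 * (e (idx (T j)))\<^sup>2 / (2 * n\<^sup>2))"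
      by (rule exp_sum[symmetric]) simp
    also have "(\<Sum>j<n. mu (idx (T j)) * (y (idx (T j)) - snd (T j)) - lam\<^sup>2 * (e (idx (T j)))\<^sup>2 / (2 * n\<^sup>2))
        = \<sigma> * lam * W T - lam\<^sup>2 * T1 T / (2 * n)"
    proof -
      have "(\<Sum>j<n. mu (idx (T j)) * (y (idx (T j)) - snd (T j))) = (\<Sum>i<B. mu i * (y i * cnt i T - ssum i T))"
        using regroup[OF TP, of "\<lambda>i z. mu i * (y i - snd z)"] by (simp add: sum_lin)
      also have "\<dots> = \<sigma> * lam * W T"
        by (simp add: W_def mu_def sum_distrib_left) (intro sum.cong refl, simp add: algebra_simps diff_divide_distrib)
      finally have 1: "(\<Sum>j<n. mu (idx (T j)) * (y (idx (T j)) - snd (T j))) = \<sigma> * lam * W T" .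
      have "(\<Sum>j<n. lam\<^sup>2 * (e (idx (T j)))\<^sup>2 / (2 * n\<^sup>2)) = (\<Sum>i<B. lam\<^sup>2 * (e i)\<^sup>2 / (2 * n\<^sup>2) * cnt i T)"
        using regroup[OF TP, of "\<lambda>i z. lam\<^sup>2 * (e i)\<^sup>2 / (2 * n\<^sup>2)"] by (simp add: sum_const_bin)
      also have "\<dots> = lam\<^sup>2 * T1 T / (2 * n)"
        using npos by (simp add: T1_def sum_distrib_left sum_divide_distrib power2_eq_square field_simps)
      finally have 2: "(\<Sum>j<n. lam\<^sup>2 * (e (idx (T j)))\<^sup>2 / (2 * n\<^sup>2)) = lam\<^sup>2 * T1 T / (2 * n)" .
      show ?thesis by (simp only: sum_subtractf 1 2)
    qed
    finally have eq: "(\<Prod>j<n. g j (T j)) = exp (\<sigma> * lam * W T - lam\<^sup>2 * T1 T / (2 * n))" .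
    have "lam * t \<le> lam * (\<sigma> * W T)" using tW lam0 by (rule mult_left_mono)
    moreover have "lam\<^sup>2 * T1 T / (2 * n) \<le> lam\<^sup>2 * V / (2 * n)"
      using TV npos by (intro divide_right_mono mult_left_mono) auto
    ultimately show "exp (lam * t - lam\<^sup>2 * V / (2 * n)) \<le> (\<Prod>j<n. g j (T j))"
      unfolding eq by (simp add: algebra_simps)
  qed simp
  also have "\<dots> \<le> 1 / exp (lam * t - lam\<^sup>2 * V / (2 * n))"
  proof (intro divide_right_mono prod_le_1 conjI)
    fix j show "0 \<le> integral\<^sup>L D (g j)"
      by (intro integral_nonneg_AE AE_I2) (auto simp: g_def intro!: sum_nonneg mult_nonneg_nonneg simp: c_def)
    show "integral\<^sup>L D (g j) \<le> 1" by (rule intg)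
  qed simp
  also have "lam * t - lam\<^sup>2 * V / (2 * n) = n * t\<^sup>2 / (2 * V)"
    using V npos by (simp add: lam_def power2_eq_square field_simps)
  finally show ?thesis by (simp add: exp_minus field_simps)
qed

end

context calsetup begin

definition "Aset i J \<sigma> = {T \<in> space P. (\<forall>j\<in>{..<n}. (f (fst (T j)) = s i) = (j \<in> J)) \<and> J \<noteq> {} \<and>
     sqrt (card J * L / 2) \<le> \<sigma> * (card J * y i - (\<Sum>j\<in>J. snd (T j)))}"

lemma ffstj_meas: "j < n \<Longrightarrow> (\<lambda>T. f (fst (T j))) \<in> borel_measurable P"
  unfolding P_def
  using measurable_compose[OF measurable_component_singleton[of j "{..<n}" "\<lambda>_. D"] ffst_meas] by simp

lemma Aset_sets:
  assumes J: "J \<subseteq> {..<n}"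
  shows "Aset i J \<sigma> \<in> sets P"
proof -
  have sm[measurable]: "(\<lambda>T. \<Sum>j\<in>J. snd (T j)) \<in> borel_measurable P"
    unfolding P_def
  proof (intro borel_measurable_sum)
    fix j assume "j \<in> J"
    then have j: "j \<in> {..<n}" using J by auto
    show "(\<lambda>x. snd (x j)) \<in> borel_measurable (Pi\<^sub>M {..<n} (\<lambda>_. D))"
      using measurable_compose[OF measurable_component_singleton[OF j, of "\<lambda>_. D"] snd_meas] by simp
  qed
  have 1: "{T \<in> space P. \<forall>j\<in>{..<n}. (f (fst (T j)) = s i) = (j \<in> J)} \<in> sets P"
  proof (rule sets.sets_Collect_finite_All)
    fix j assume "j \<in> {..<n}"
    have "(\<lambda>T. f (fst (T j))) -` {s i} \<inter> space P \<in> sets P"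
      by (rule measurable_sets[OF ffstj_meas]) (use \<open>j \<in> {..<n}\<close> in auto)
    moreover have "(\<lambda>T. f (fst (T j))) -` {s i} \<inter> space P = {T \<in> space P. f (fst (T j)) = s i}" by auto
    ultimately have m1: "{T \<in> space P. f (fst (T j)) = s i} \<in> sets P" by simp
    moreover have "{T \<in> space P. f (fst (T j)) \<noteq> s i} = space P - {T \<in> space P. f (fst (T j)) = s i}" by auto
    then have "{T \<in> space P. f (fst (T j)) \<noteq> s i} \<in> sets P" using m1 by auto
    ultimately show "{T \<in> space P. (f (fst (T j)) = s i) = (j \<in> J)} \<in> sets P"
      by (cases "j \<in> J") auto
  qed simp
  have 2: "{T \<in> space P. J \<noteq> {} \<and> sqrt (card J * L / 2) \<le> \<sigma> * (card J * y i - (\<Sum>j\<in>J. snd (T j)))} \<in> sets P"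
    by measurable
  have "Aset i J \<sigma> = {T \<in> space P. \<forall>j\<in>{..<n}. (f (fst (T j)) = s i) = (j \<in> J)} \<inter>
      {T \<in> space P. J \<noteq> {} \<and> sqrt (card J * L / 2) \<le> \<sigma> * (card J * y i - (\<Sum>j\<in>J. snd (T j)))}"
    unfolding Aset_def by blast
  then show ?thesis using 1 2 by simp
qed

lemma Aset_bound:
  assumes i: "i < B" and J: "J \<subseteq> {..<n}" and sg: "\<sigma> = 1 \<or> \<sigma> = -1"
  shows "measure P (Aset i J \<sigma>) \<le> exp (- L) * ((\<Prod>j\<in>J. p i) * (\<Prod>j\<in>{..<n}-J. 1 - p i))"
proof (cases "J = {}")
  case True
  then have "Aset i J \<sigma> = {}" by (simp add: Aset_def)
  then show ?thesis using p_le1[of i] ppos[OF i] by (simp add: prod_nonneg)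
next
  case False
  have finJ: "finite J" using J finite_subset by blast
  define k where "k = real (card J)"
  have k: "k > 0" using False finJ by (simp add: k_def card_gt_0_iff)
  define thr where "thr = sqrt (k * L / 2)"
  have thr0: "thr \<ge> 0" using k Lpos by (simp add: thr_def)
  have thr2: "thr\<^sup>2 = k * L / 2" using k Lpos by (simp add: thr_def)
  have sg2: "\<sigma>\<^sup>2 = 1" using sg by auto
  define mu where "mu = \<sigma> * 4 * thr / k"
  define h where "h = (\<lambda>j z. if j \<in> J then indicator (bin i) z * exp (mu * (y i - snd z)) else 1 - indicator (bin i) z)"
  have intJ: "integral\<^sup>L D (h j) \<le> p i * exp (mu\<^sup>2 / 8)" if "j \<in> J" for j
    using that bin_hoeff[OF i, of mu] by (simp add: h_def)
  have intJ0: "integral\<^sup>L D (h j) \<ge> 0" for j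
    by (intro integral_nonneg_AE AE_I2) (auto simp: h_def split: split_indicator)
  have intN: "integral\<^sup>L D (h j) = 1 - p i" if "j \<notin> J" for j
    using that int_ind[of i] by (simp add: h_def p_def' D.prob_space)
  have "measure P (Aset i J \<sigma>) \<le> (\<Prod>j<n. integral\<^sup>L D (h j)) / exp (2 * L)"
    unfolding P_def
  proof (rule prod_markov[OF Dprob])
    show "Aset i J \<sigma> \<in> sets (Pi\<^sub>M {..<n} (\<lambda>_. D))" using Aset_sets[OF J] by (simp add: P_def)
    show "h j \<in> borel_measurable D" for j by (cases "j \<in> J") (simp_all add: h_def)
    show "integrable D (h j)" for j
      by (cases "j \<in> J") (auto simp: h_def int_bin_exp int_ind)
    show "0 \<le> h j z" for j z by (auto simp: h_def split: split_indicator)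
    fix T assume T: "T \<in> Aset i J \<sigma>"
    then have TP: "T \<in> space P" and Tb: "\<And>j. j < n \<Longrightarrow> (f (fst (T j)) = s i) = (j \<in> J)"
      and Tt: "thr \<le> \<sigma> * (k * y i - (\<Sum>j\<in>J. snd (T j)))"
      by (auto simp: Aset_def thr_def k_def)
    have "(\<Prod>j<n. h j (T j)) = (\<Prod>j<n. if j \<in> J then exp (mu * (y i - snd (T j))) else 1)"
    proof (intro prod.cong refl)
      fix j assume j: "j \<in> {..<n}"
      then have Tj: "T j \<in> space D" using space_P[OF TP] by auto
      show "h j (T j) = (if j \<in> J then exp (mu * (y i - snd (T j))) else 1)"
        using Tb[of j] j Tj by (auto simp: h_def bin_def split: split_indicator)
    qed
    also have "\<dots> = (\<Prod>j\<in>J. exp (mu * (y i - snd (T j))))"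
      using J by (subst prod.If_cases) (auto intro!: prod.cong simp: Int_absorb1 Int_absorb2)
    also have "\<dots> = exp (\<Sum>j\<in>J. mu * (y i - snd (T j)))"
      by (rule exp_sum[symmetric, OF finJ])
    also have "(\<Sum>j\<in>J. mu * (y i - snd (T j))) = mu * (k * y i - (\<Sum>j\<in>J. snd (T j)))"
      by (simp add: sum_distrib_left[symmetric] sum_subtractf k_def algebra_simps)
    finally have eq: "(\<Prod>j<n. h j (T j)) = exp (mu * (k * y i - (\<Sum>j\<in>J. snd (T j))))" .
    have "4 * thr / k * thr \<le> 4 * thr / k * (\<sigma> * (k * y i - (\<Sum>j\<in>J. snd (T j))))"
      using Tt thr0 k by (intro mult_left_mono) auto
    moreover have "4 * thr / k * thr = 2 * L" using k thr2 by (simp add: power2_eq_square field_simps)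
    moreover have "mu * (k * y i - (\<Sum>j\<in>J. snd (T j))) = 4 * thr / k * (\<sigma> * (k * y i - (\<Sum>j\<in>J. snd (T j))))"
      by (simp add: mu_def)
    ultimately show "exp (2 * L) \<le> (\<Prod>j<n. h j (T j))" unfolding eq by simp
  qed simp
  also have "(\<Prod>j<n. integral\<^sup>L D (h j)) = (\<Prod>j\<in>{..<n}-J. integral\<^sup>L D (h j)) * (\<Prod>j\<in>J. integral\<^sup>L D (h j))"
    by (rule prod.subset_diff[OF J]) simp
  also have "\<dots> \<le> (\<Prod>j\<in>{..<n}-J. 1 - p i) * (\<Prod>j\<in>J. p i * exp (mu\<^sup>2 / 8))"
    using p_le1[of i]
    by (intro mult_mono prod_mono) (auto simp: intN intJ intJ0 prod_nonneg)
  also have "(\<Prod>j\<in>J. p i * exp (mu\<^sup>2 / 8)) = (\<Prod>j\<in>J. p i) * exp (L)"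
  proof -
    have "(\<Prod>j\<in>J. p i * exp (mu\<^sup>2 / 8)) = (\<Prod>j\<in>J. p i) * exp (mu\<^sup>2 / 8) ^ card J"
      by (simp add: prod.distrib power_mult_distrib)
    also have "exp (mu\<^sup>2 / 8) ^ card J = exp (k * (mu\<^sup>2 / 8))"
      unfolding k_def exp_of_nat_mult[symmetric] ..
    also have "k * (mu\<^sup>2 / 8) = L"
    proof -
      have "mu\<^sup>2 = 16 * thr\<^sup>2 / k\<^sup>2" by (simp add: mu_def power_mult_distrib power_divide sg2)
      then show ?thesis using k unfolding thr2 by (simp add: field_simps power2_eq_square)
    qed
    finally show ?thesis .
  qed
  finally have "measure P (Aset i J \<sigma>) \<le> (\<Prod>j\<in>{..<n}-J. 1 - p i) * ((\<Prod>j\<in>J. p i) * exp L) / exp (2 * L)"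
    by (simp add: divide_right_mono)
  also have "\<dots> = exp (- L) * ((\<Prod>j\<in>J. p i) * (\<Prod>j\<in>{..<n}-J. 1 - p i))"
  proof -
    have "exp (2 * L) = exp L * exp L" by (simp flip: exp_add)
    then show ?thesis by (simp add: exp_minus field_simps)
  qed
  finally show ?thesis .
qed

lemma term3:
  assumes i: "i < B"
  shows "measure P {T \<in> space P. L / 2 * cnt i T < (cnt i T * y i - ssum i T)\<^sup>2} \<le> 2 * exp (- L)"
proof -
  define F where "F J = Aset i J 1 \<union> Aset i J (-1)" for J
  have sub: "{T \<in> space P. L / 2 * cnt i T < (cnt i T * y i - ssum i T)\<^sup>2} \<subseteq> (\<Union>J\<in>Pow {..<n}. F J)"
  proof
    fix T assume T: "T \<in> {T \<in> space P. L / 2 * cnt i T < (cnt i T * y i - ssum i T)\<^sup>2}"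
    then have TP: "T \<in> space P" and lt: "L / 2 * cnt i T < (cnt i T * y i - ssum i T)\<^sup>2" by auto
    define J where "J = bin_idx f s n T i"
    have J: "J \<in> Pow {..<n}" by (auto simp: J_def bin_idx_def)
    have cJ: "real (card J) = cnt i T" by (simp add: J_def card_bin_idx)
    have sJ: "(\<Sum>j\<in>J. snd (T j)) = ssum i T" by (simp add: J_def sum_bin_idx)
    have "cnt i T \<noteq> 0" using lt cnt0[of i T] by auto
    then have Jne: "J \<noteq> {}" using cJ by auto
    have "card J * L / 2 < (cnt i T * y i - ssum i T)\<^sup>2"
      using lt cJ by (simp add: algebra_simps)
    then have "sqrt (card J * L / 2) < sqrt ((cnt i T * y i - ssum i T)\<^sup>2)"
      by (rule real_sqrt_less_mono)
    then have lt2: "sqrt (card J * L / 2) < \<bar>card J * y i - (\<Sum>j\<in>J. snd (T j))\<bar>"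
      by (simp add: cJ sJ algebra_simps)
    have memb: "\<forall>j\<in>{..<n}. (f (fst (T j)) = s i) = (j \<in> J)" by (auto simp: J_def bin_idx_def)
    have "T \<in> F J"
      using lt2 memb Jne TP unfolding F_def Aset_def by (auto simp: abs_if split: if_splits)
    then show "T \<in> (\<Union>J\<in>Pow {..<n}. F J)" using J by blast
  qed
  have Fsets: "J \<in> Pow {..<n} \<Longrightarrow> F J \<in> sets P" for J
    unfolding F_def by (auto intro!: Aset_sets)
  have "measure P {T \<in> space P. L / 2 * cnt i T < (cnt i T * y i - ssum i T)\<^sup>2} \<le> measure P (\<Union>J\<in>Pow {..<n}. F J)"
    using sub Fsets by (intro PP.finite_measure_mono) auto
  also have "\<dots> \<le> (\<Sum>J\<in>Pow {..<n}. measure P (F J))"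
    by (rule measure_UNION_le) (auto intro: Fsets)
  also have "\<dots> \<le> (\<Sum>J\<in>Pow {..<n}. 2 * exp (- L) * ((\<Prod>j\<in>J. p i) * (\<Prod>j\<in>{..<n}-J. 1 - p i)))"
  proof (intro sum_mono)
    fix J assume J: "J \<in> Pow {..<n}"
    have "measure P (F J) \<le> measure P (Aset i J 1) + measure P (Aset i J (-1))"
      unfolding F_def using J by (intro measure_Un_le Aset_sets) auto
    also have "\<dots> \<le> exp (- L) * ((\<Prod>j\<in>J. p i) * (\<Prod>j\<in>{..<n}-J. 1 - p i)) + exp (- L) * ((\<Prod>j\<in>J. p i) * (\<Prod>j\<in>{..<n}-J. 1 - p i))"
      using J by (intro add_mono Aset_bound[OF i]) auto
    finally show "measure P (F J) \<le> 2 * exp (- L) * ((\<Prod>j\<in>J. p i) * (\<Prod>j\<in>{..<n}-J. 1 - p i))" by simp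
  qed
  also have "\<dots> = 2 * exp (- L) * (\<Prod>j<n. p i + (1 - p i))"
    by (simp only: sum_distrib_left[symmetric] prod_add[OF finite_lessThan])
  finally show ?thesis by simp
qed

end

context calsetup begin

definition "T3 T = (\<Sum>i<B. (cnt i T * y i - ssum i T)\<^sup>2 / (n * cnt i T))"

lemma decomp: "plugin_err2 f s B n T = T1 T + W T + T3 T"
proof -
  have "cnt i T / n * (s i - ssum i T / cnt i T)\<^sup>2
      = cnt i T / n * (e i)\<^sup>2 + 2 * e i * (cnt i T * y i - ssum i T) / n + (cnt i T * y i - ssum i T)\<^sup>2 / (n * cnt i T)" for i
  proof (cases "cnt i T = 0")
    case True
    then show ?thesis using cnt0[OF True] by simp
  next
    case False
    then show ?thesis using npos by (simp add: e_def field_simps power2_eq_square)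
  qed
  then show ?thesis
    unfolding plugin_eq T1_def W_def T3_def by (simp add: sum.distrib)
qed

lemma plugin_meas: "(\<lambda>T. plugin_err2 f s B n T) \<in> borel_measurable P"
  unfolding decomp T3_def by measurable

lemma main_loc:
  "let c = sqrt (3 / (real n * Min (cal_p D f s ` {..<B})) * ln (2 * real B / \<delta>));
             E2 = cal_err2 D f s B
         in measure (PiM {..<n} (\<lambda>_. D))
              {T \<in> space (PiM {..<n} (\<lambda>_. D)).
                 \<bar>plugin_err2 f s B n T - E2\<bar>
                   \<le> c * E2 + sqrt (2 * (1 + c) * E2 / real n * ln (2 / \<delta>))
                      + real B / (2 * real n) * ln (2 * real B / \<delta>)}
            \<ge> 1 - 3 * \<delta>"
proof -
  define pmin where "pmin = Min (p ` {..<B})"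
  define c where "c = sqrt (3 / (real n * pmin) * L)"
  define E2 where "E2 = (\<Sum>i<B. p i * (e i)\<^sup>2)"
  define L2 where "L2 = ln (2 / \<delta>)"
  define V where "V = (1 + c) * E2"
  define t where "t = sqrt (2 * V / n * L2)"
  have E2def: "cal_err2 D f s B = E2" by (simp add: cal_err2_def E2_def p_def e_def y_def)
  have pmin_def': "Min (cal_p D f s ` {..<B}) = pmin" by (simp add: pmin_def p_def[abs_def])
  have pmin_le: "i < B \<Longrightarrow> pmin \<le> p i" for i unfolding pmin_def by (rule Min_le) auto
  have pmin_pos: "pmin > 0" unfolding pmin_def using Bpos ppos by (subst Min_gr_iff) auto
  have c0: "c \<ge> 0" using pmin_pos Lpos npos by (simp add: c_def)
  have pnn: "0 \<le> p i * (e i)\<^sup>2" if "i < B" for i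
    using ppos[OF that] by (intro mult_nonneg_nonneg) auto
  have E20: "E2 \<ge> 0" unfolding E2_def using ppos by (intro sum_nonneg mult_nonneg_nonneg) (auto intro: less_imp_le)
  have L2pos: "L2 > 0" using dpos dlt1 by (simp add: L2_def)
  have V0: "V \<ge> 0" using c0 E20 by (simp add: V_def)
  have t0: "t \<ge> 0" using V0 L2pos npos by (simp add: t_def)
  have expL: "exp (- L) = \<delta> / (2 * B)"
    using Bpos dpos by (simp add: L_def exp_minus)
  have expL2: "exp (- L2) = \<delta> / 2"
    using dpos by (simp add: L2_def exp_minus)
  define F1 where "F1 = (\<Union>i<B. {T \<in> space P. dd i \<le> \<bar>cnt i T - n * p i\<bar>})"
  define F3 where "F3 = (\<Union>i<B. {T \<in> space P. L / 2 * cnt i T < (cnt i T * y i - ssum i T)\<^sup>2})"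
  define F2 where "F2 = (if E2 > 0 then {T \<in> space P. t \<le> 1 * W T \<and> T1 T \<le> V} \<union> {T \<in> space P. t \<le> (-1) * W T \<and> T1 T \<le> V} else {})"
  define G where "G = {T \<in> space P. \<bar>plugin_err2 f s B n T - E2\<bar> \<le> c * E2 + t + real B / (2 * real n) * L}"
  have F1s: "F1 \<in> sets P" unfolding F1_def by measurable
  have F2s: "F2 \<in> sets P" unfolding F2_def by (cases "E2 > 0") (simp_all, measurable)
  have F3s: "F3 \<in> sets P" unfolding F3_def by measurable
  have Gs: "G \<in> sets P" unfolding G_def using plugin_meas by measurable
  have mF1: "measure P F1 \<le> \<delta>"
  proof -
    have "measure P F1 \<le> (\<Sum>i<B. measure P {T \<in> space P. dd i \<le> \<bar>cnt i T - n * p i\<bar>})"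
      unfolding F1_def by (rule measure_UNION_le) auto
    also have "\<dots> \<le> (\<Sum>i<B. 2 * exp (- L))" by (intro sum_mono chernoff) auto
    also have "\<dots> = \<delta>" using Bpos by (simp add: expL)
    finally show ?thesis .
  qed
  have mF3: "measure P F3 \<le> \<delta>"
  proof -
    have "measure P F3 \<le> (\<Sum>i<B. measure P {T \<in> space P. L / 2 * cnt i T < (cnt i T * y i - ssum i T)\<^sup>2})"
      unfolding F3_def by (rule measure_UNION_le) auto
    also have "\<dots> \<le> (\<Sum>i<B. 2 * exp (- L))" by (intro sum_mono term3) auto
    also have "\<dots> = \<delta>" using Bpos by (simp add: expL)
    finally show ?thesis .
  qed
  have mF2: "measure P F2 \<le> \<delta>"
  proof (cases "E2 > 0")
    case True
    then have Vp: "V > 0" using c0 by (simp add: V_def)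
    have ex: "exp (- (n * t\<^sup>2 / (2 * V))) = \<delta> / 2"
    proof -
      have "t\<^sup>2 = 2 * V / n * L2" using V0 L2pos npos by (simp add: t_def)
      then have "n * t\<^sup>2 / (2 * V) = L2" using Vp npos by (simp add: field_simps)
      then show ?thesis using expL2 by simp
    qed
    have "measure P F2 \<le> measure P {T \<in> space P. t \<le> 1 * W T \<and> T1 T \<le> V} + measure P {T \<in> space P. t \<le> (-1) * W T \<and> T1 T \<le> V}"
      unfolding F2_def using True by (simp only: if_True) (rule measure_Un_le; measurable)
    also have "\<dots> \<le> \<delta> / 2 + \<delta> / 2"
      using hoeff_W[OF Vp t0, of 1] hoeff_W[OF Vp t0, of "-1"] ex by (intro add_mono) auto
    finally show ?thesis by simp
  qed (simp add: F2_def dpos less_imp_le)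
  have subG: "space P - (F1 \<union> F2 \<union> F3) \<subseteq> G"
  proof
    fix T assume T: "T \<in> space P - (F1 \<union> F2 \<union> F3)"
    then have TP: "T \<in> space P" by auto
    have g1: "\<bar>cnt i T - n * p i\<bar> < dd i" if i: "i < B" for i using T i by (force simp: F1_def not_le)
    have g3: "(cnt i T * y i - ssum i T)\<^sup>2 \<le> L / 2 * cnt i T" if i: "i < B" for i
      using T i by (auto simp: F3_def not_less)
    have pdev: "\<bar>cnt i T / n - p i\<bar> \<le> c * p i" if i: "i < B" for i
    proof -
      have "dd i \<le> n * (c * p i)"
      proof -
        have "3 * n * p i * L \<le> (n * (c * p i))\<^sup>2"
        proof -
          have "(n * (c * p i))\<^sup>2 = n\<^sup>2 * (p i)\<^sup>2 * (3 / (n * pmin) * L)"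
            using pmin_pos Lpos npos by (simp add: c_def power_mult_distrib)
          also have "\<dots> = (3 * n * p i * L) * (p i / pmin)"
            using pmin_pos npos by (simp add: field_simps power2_eq_square)
          also have "\<dots> \<ge> (3 * n * p i * L) * 1"
            using pmin_le[OF i] pmin_pos ppos[OF i] Lpos npos
            by (intro mult_left_mono) auto
          finally show ?thesis by simp
        qed
        then have "sqrt (3 * n * p i * L) \<le> sqrt ((n * (c * p i))\<^sup>2)" by (rule real_sqrt_le_mono)
        then show ?thesis using c0 ppos[OF i] by (simp add: dd_def)
      qed
      then have "\<bar>cnt i T - n * p i\<bar> \<le> n * (c * p i)" using g1[OF i] by simp
      moreover have "cnt i T / n - p i = (cnt i T - n * p i) / n" using npos by (simp add: field_simps)
      ultimately show ?thesis using npos by (simp add: abs_divide pos_divide_le_eq mult.commute mult.left_commute)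
    qed
    have T1E: "\<bar>T1 T - E2\<bar> \<le> c * E2"
    proof -
      have "T1 T - E2 = (\<Sum>i<B. (cnt i T / n - p i) * (e i)\<^sup>2)"
        by (simp add: T1_def E2_def sum_subtractf algebra_simps)
      also have "\<bar>\<dots>\<bar> \<le> (\<Sum>i<B. \<bar>(cnt i T / n - p i) * (e i)\<^sup>2\<bar>)" by (rule sum_abs)
      also have "\<dots> \<le> (\<Sum>i<B. c * p i * (e i)\<^sup>2)"
        using pdev by (intro sum_mono) (auto simp: abs_mult intro!: mult_right_mono)
      also have "\<dots> = c * E2" by (simp add: E2_def sum_distrib_left algebra_simps)
      finally show ?thesis .
    qed
    have T1V: "T1 T \<le> V" using T1E by (simp add: V_def algebra_simps)
    have Wt: "\<bar>W T\<bar> \<le> t"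
    proof (cases "E2 > 0")
      case True
      then show ?thesis using T TP T1V by (auto simp: F2_def)
    next
      case False
      then have "E2 = 0" using E20 by simp
      then have all0: "\<forall>i\<in>{..<B}. p i * (e i)\<^sup>2 = 0"
        unfolding E2_def by (subst sum_nonneg_eq_0_iff[symmetric]) (auto intro: pnn)
      have "e i = 0" if "i < B" for i
      proof -
        have "p i * (e i)\<^sup>2 = 0" using all0 that by blast
        then show ?thesis using ppos[OF that] by simp
      qed
      then have "W T = 0" by (simp add: W_def)
      then show ?thesis using t0 by simp
    qed
    have T3b: "0 \<le> T3 T \<and> T3 T \<le> real B / (2 * real n) * L"
    proof
      show "0 \<le> T3 T" unfolding T3_def using cnt_nonneg by (intro sum_nonneg divide_nonneg_nonneg mult_nonneg_nonneg) auto
      have "T3 T \<le> (\<Sum>i<B. L / (2 * n))"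
        unfolding T3_def
      proof (intro sum_mono)
        fix i assume i: "i \<in> {..<B}"
        show "(cnt i T * y i - ssum i T)\<^sup>2 / (n * cnt i T) \<le> L / (2 * n)"
        proof (cases "cnt i T = 0")
          case True then show ?thesis using Lpos by simp
        next
          case False
          then have cp: "cnt i T > 0" using cnt_nonneg[of i T] by simp
          have "(cnt i T * y i - ssum i T)\<^sup>2 / (n * cnt i T) \<le> (L / 2 * cnt i T) / (n * cnt i T)"
            using g3 i cp npos by (intro divide_right_mono) auto
          also have "\<dots> = L / (2 * n)" using cp by simp
          finally show ?thesis .
        qed
      qed
      then show "T3 T \<le> real B / (2 * real n) * L" by simp
    qed
    have "\<bar>plugin_err2 f s B n T - E2\<bar> = \<bar>(T1 T - E2) + W T + T3 T\<bar>" by (simp add: decomp)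
    also have "\<dots> \<le> c * E2 + t + real B / (2 * real n) * L"
      using T1E Wt T3b by linarith
    finally show "T \<in> G" using TP by (simp add: G_def)
  qed
  have "1 - 3 * \<delta> \<le> 1 - measure P (F1 \<union> F2 \<union> F3)"
  proof -
    have "measure P (F1 \<union> F2 \<union> F3) \<le> measure P (F1 \<union> F2) + measure P F3"
      using F1s F2s F3s by (intro measure_Un_le) auto
    also have "\<dots> \<le> measure P F1 + measure P F2 + measure P F3"
      using F1s F2s measure_Un_le[of F1 P F2] by simp
    finally show ?thesis using mF1 mF2 mF3 by simp
  qed
  also have "\<dots> = measure P (space P - (F1 \<union> F2 \<union> F3))"
    using F1s F2s F3s by (subst PP.finite_measure_compl) (auto simp: PP.prob_space)
  also have "\<dots> \<le> measure P G"
    using subG Gs by (intro PP.finite_measure_mono) auto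
  finally have "1 - 3 * \<delta> \<le> measure P G" .
  moreover have teq: "sqrt (2 * (1 + c) * E2 / real n * L2) = t" by (simp add: t_def V_def mult.assoc)
  ultimately show ?thesis
    unfolding Let_def E2def pmin_def' L_def[symmetric] L2_def[symmetric] c_def[symmetric] teq
    by (simp only: G_def P_def)
qed

end

theorem mainTheorem10:
  fixes Mx :: "'x measure" and D :: "('x \<times> real) measure"
    and f :: "'x \<Rightarrow> real" and s :: "nat \<Rightarrow> real" and B n :: nat and \<delta> :: real
  assumes "prob_space D"
    and "sets D = sets (Mx \<Otimes>\<^sub>M borel)"
    and "AE z in D. snd z \<in> {0, 1}"
    and "f \<in> borel_measurable Mx"
    and "\<And>x. x \<in> space Mx \<Longrightarrow> f x \<in> s ` {..<B}"
    and "inj_on s {..<B}"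
    and "\<And>i. i < B \<Longrightarrow> s i \<in> {0..1}"
    and "n > 0"
    and "0 < \<delta>" and "\<delta> < 1"
    and "\<And>i. i < B \<Longrightarrow> cal_p D f s i > 12 / real n * ln (2 * real B / \<delta>)"
  shows "let c = sqrt (3 / (real n * Min (cal_p D f s ` {..<B})) * ln (2 * real B / \<delta>));
             E2 = cal_err2 D f s B
         in measure (PiM {..<n} (\<lambda>_. D))
              {T \<in> space (PiM {..<n} (\<lambda>_. D)).
                 \<bar>plugin_err2 f s B n T - E2\<bar>
                   \<le> c * E2 + sqrt (2 * (1 + c) * E2 / real n * ln (2 / \<delta>))
                      + real B / (2 * real n) * ln (2 * real B / \<delta>)}
            \<ge> 1 - 3 * \<delta>"
proof -
  interpret calsetup Mx D f s B n \<delta>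
    by (rule calsetup.intro[OF assms])
  show ?thesis by (rule main_loc)
qed

end
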